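(* Let $m,n,r\ge1$ and let $\sigma:I^m\to J^r(\mathbb R^m,\mathbb R^n)$ be a section with $\sigma^{(r-1)}=0$. Then one can write $\sigma=\sum_\beta\sigma_\beta$, the sum ranging over multi-indices $\beta=(\beta_1,\dots,\beta_k)$ with $1\le\beta_j\le m$ and $k=|\beta|\le r$ (up to permutation), for sections $\sigma_\beta:I^m\to J^r(\mathbb R^m,\mathbb R^n)$ such that: each $\sigma_\beta$ is primitive with respect to the constant hyperplane field $\tau_\beta=\ker(dx_{\beta_1}+\dots+dx_{\beta_k})$; each $\sigma_\beta$ depends smoothly on $\sigma$; and if $\sigma=0$ on an open neighborhood of a closed subset $A\subset I^m$, then every $\sigma_\beta=0$ on an open neighborhood of $A$.
   Context: $I=[-1,1]$. $J^r(\mathbb R^m,\mathbb R^n)\cong\mathbb R^m\times(\mathcal P_r)^n$ via Taylor polynomials of degree $\le r$, with linear structure (sum of sections) from $\mathbb R^n$; $\sigma^{(r-1)}$ is the truncation to degree $\le r-1$. A section $\sigma$ is primitive with respect to a hyperplane field $\tau$ if $\sigma^\perp=0$, where $\sigma^\perp(x)$ for $\sigma(x)=j^r(h)(x)$ consists of the $(r-1)$-jet of $h$ at $x$ and the derivatives $\partial_\nu\partial_\alpha h(x)$, $|\alpha|=r-1$, $\nu\in\tau_x$. *)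

theory Defs
  imports "HOL-Analysis.Analysis"
begin

text \<open>Points of R^m are vectors x :: real^'m ('m a finite index type,
so m = CARD('m) \<ge> 1), R^n-values are real^'n. A multi-index is a function
alpha :: 'm \<Rightarrow> nat with |alpha| = sum alpha UNIV. A fibre of J^r(R^m,R^n) over a point
is represented by the Taylor coefficients p :: ('m \<Rightarrow> nat) \<Rightarrow> real^'n of the
jet's Taylor polynomial sum_{|alpha| \<le> r} p alpha * y^alpha (so p alpha = d^alpha h(x) / alpha!),
coefficients with |alpha| > r being 0.  A section over I^m is a map
s :: real^'m \<Rightarrow> (('m \<Rightarrow> nat) \<Rightarrow> real^'n) (its values on the cube matter).\<close>

type_synonym ('m, 'n) fibre = "('m \<Rightarrow> nat) \<Rightarrow> real^'n"

definition mdeg :: "('m::finite \<Rightarrow> nat) \<Rightarrow> nat" where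
  "mdeg alpha = sum alpha UNIV"

definition mfact :: "('m::finite \<Rightarrow> nat) \<Rightarrow> real" where
  "mfact alpha = (\<Prod>j\<in>UNIV. fact (alpha j))"

definition cube :: "(real^'m::finite) set" where
  "cube = {x. \<forall>i. x$i \<in> {-1..1}}"

definition is_jet_section :: "nat \<Rightarrow> (real^'m::finite \<Rightarrow> ('m,'n::finite) fibre) \<Rightarrow> bool" where
  "is_jet_section r s \<longleftrightarrow> (\<forall>x\<in>cube. \<forall>alpha. mdeg alpha > r \<longrightarrow> s x alpha = 0)"

definition lower_trunc_zero :: "nat \<Rightarrow> (real^'m::finite \<Rightarrow> ('m,'n::finite) fibre) \<Rightarrow> bool" where
  "lower_trunc_zero r s \<longleftrightarrow> (\<forall>x\<in>cube. \<forall>alpha. mdeg alpha \<le> r - 1 \<longrightarrow> s x alpha = 0)"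

text \<open>Primitive with respect to a hyperplane field tau: the (r-1)-jet vanishes and
d_nu d_alpha h(x) = sum_j nu_j (alpha+e_j)! p(alpha+e_j) = 0 for |alpha| = r-1, nu in tau x.\<close>
definition primitive :: "nat \<Rightarrow> (real^'m::finite \<Rightarrow> (real^'m) set) \<Rightarrow>
    (real^'m \<Rightarrow> ('m,'n::finite) fibre) \<Rightarrow> bool" where
  "primitive r tau s \<longleftrightarrow> (\<forall>x\<in>cube.
     (\<forall>alpha. mdeg alpha \<le> r - 1 \<longrightarrow> s x alpha = 0) \<and>
     (\<forall>alpha nu. mdeg alpha = r - 1 \<longrightarrow> nu \<in> tau x \<longrightarrow>
        (\<Sum>j\<in>UNIV. (nu$j * mfact (alpha(j := alpha j + 1))) *\<^sub>R s x (alpha(j := alpha j + 1))) = 0))"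

text \<open>The constant hyperplane field ker(dx_{beta_1} + ... + dx_{beta_k}); the unordered
multi-index beta is encoded by its multiplicities beta :: 'm \<Rightarrow> nat, k = mdeg beta.\<close>
definition tau_hyp :: "('m::finite \<Rightarrow> nat) \<Rightarrow> real^'m \<Rightarrow> (real^'m) set" where
  "tau_hyp beta x = {nu. (\<Sum>j\<in>UNIV. real (beta j) * nu$j) = 0}"

definition beta_indices :: "nat \<Rightarrow> ('m::finite \<Rightarrow> nat) set" where
  "beta_indices r = {beta. 1 \<le> mdeg beta \<and> mdeg beta \<le> r}"

text \<open>Smoothness on the space H_r of fibres with only degree-r coefficients
(the fibres of sections with sigma^(r-1) = 0), a finite-dimensional space with
coordinates p alpha $ i, |alpha| = r: continuity and existence of continuous
partial derivatives of all orders.\<close>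
definition Hr :: "nat \<Rightarrow> ('m::finite,'n::finite) fibre set" where
  "Hr r = {p. \<forall>alpha. mdeg alpha \<noteq> r \<longrightarrow> p alpha = 0}"

definition contH :: "nat \<Rightarrow> (('m::finite,'n::finite) fibre \<Rightarrow> real) \<Rightarrow> bool" where
  "contH r g \<longleftrightarrow> (\<forall>p\<in>Hr r. \<forall>e>0. \<exists>d>0. \<forall>q\<in>Hr r.
      (\<forall>alpha. mdeg alpha = r \<longrightarrow> norm (q alpha - p alpha) < d) \<longrightarrow> \<bar>g q - g p\<bar> < e)"

fun CkH :: "nat \<Rightarrow> nat \<Rightarrow> (('m::finite,'n::finite) fibre \<Rightarrow> real) \<Rightarrow> bool" where
  "CkH r 0 g = contH r g"
| "CkH r (Suc k) g = (contH r g \<and>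
     (\<forall>alpha i. mdeg alpha = r \<longrightarrow> (\<exists>g'.
        (\<forall>p\<in>Hr r. ((\<lambda>t. g (p(alpha := p alpha + t *\<^sub>R axis i 1))) has_real_derivative g' p) (at 0))
        \<and> CkH r k g')))"

definition smoothH :: "nat \<Rightarrow> (('m::finite,'n::finite) fibre \<Rightarrow> real) \<Rightarrow> bool" where
  "smoothH r g \<longleftrightarrow> (\<forall>k. CkH r k g)"

definition smooth_fibre_map :: "nat \<Rightarrow> (('m::finite,'n::finite) fibre \<Rightarrow> ('m,'n) fibre) \<Rightarrow> bool" where
  "smooth_fibre_map r F \<longleftrightarrow>
     (\<forall>p\<in>Hr r. \<forall>alpha. mdeg alpha > r \<longrightarrow> F p alpha = 0) \<and>
     (\<forall>alpha i. mdeg alpha \<le> r \<longrightarrow> smoothH r (\<lambda>p. F p alpha $ i))"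

end

theory Submission imports Defs begin

lemma alt_shift:
  fixes f :: "nat \<Rightarrow> real"
  shows "(\<Sum>b\<le>Suc n. (-1)^b * real (Suc n choose b) * f b) =
         - (\<Sum>b\<le>n. (-1)^b * real (n choose b) * (f (Suc b) - f b))"
proof -
  have "(\<Sum>b\<le>Suc n. (-1)^b * real (Suc n choose b) * f b) =
        f 0 + (\<Sum>b\<le>n. (-1)^(Suc b) * real (Suc n choose Suc b) * f (Suc b))"
    by (subst sum.atMost_Suc_shift) simp
  also have "\<dots> = f 0 + (\<Sum>b\<le>n. (-1)^(Suc b) * real (n choose Suc b) * f (Suc b))
      - (\<Sum>b\<le>n. (-1)^b * real (n choose b) * f (Suc b))"
    by (simp add: sum.distrib[symmetric] sum_subtractf[symmetric] algebra_simps)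
  also have "f 0 + (\<Sum>b\<le>n. (-1)^(Suc b) * real (n choose Suc b) * f (Suc b))
      = (\<Sum>b\<le>Suc n. (-1)^b * real (n choose b) * f b)"
    by (simp only: sum.atMost_Suc_shift) simp
  also have "\<dots> = (\<Sum>b\<le>n. (-1)^b * real (n choose b) * f b)"
    by simp
  finally show ?thesis by (simp add: sum_subtractf algebra_simps)
qed

lemma fin_diff:
  "k \<le> n \<Longrightarrow> (\<Sum>b\<le>n. (-1)^b * real (n choose b) * (real b + x)^k) =
     (if k = n then (-1)^n * fact n else 0)"
proof (induction n arbitrary: k x)
  case 0 then show ?case by simp
next
  case (Suc n)
  show ?case
  proof (cases k)
    case 0
    have "(\<Sum>b\<le>Suc n. (-1)^b * real (Suc n choose b) * (real b + x)^k) =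
      - (\<Sum>b\<le>n. (-1)^b * real (n choose b) * ((real (Suc b) + x)^k - (real b + x)^k))"
      by (rule alt_shift)
    then show ?thesis using 0 by simp
  next
    case (Suc k')
    have bin: "(y + 1)^Suc k' - y^Suc k' = (\<Sum>i\<le>k'. real (Suc k' choose i) * y^i)" for y :: real
    proof -
      have "(y+1)^Suc k' = (\<Sum>i\<le>Suc k'. real (Suc k' choose i) * y^i)"
        using binomial_ring[of y 1 "Suc k'"] by simp
      also have "\<dots> = (\<Sum>i\<le>k'. real (Suc k' choose i) * y^i) + y^Suc k'"
        by simp
      finally show ?thesis by simp
    qed
    have "(\<Sum>b\<le>Suc n. (-1)^b * real (Suc n choose b) * (real b + x)^k) =
      - (\<Sum>b\<le>n. (-1)^b * real (n choose b) * ((real (Suc b) + x)^k - (real b + x)^k))"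
      by (rule alt_shift)
    also have "\<dots> = - (\<Sum>b\<le>n. (-1)^b * real (n choose b) * (\<Sum>i\<le>k'. real (Suc k' choose i) * (real b + x)^i))"
      using bin[of "real _ + x"] Suc by (simp add: add_ac)
    also have "\<dots> = - (\<Sum>i\<le>k'. real (Suc k' choose i) * (\<Sum>b\<le>n. (-1)^b * real (n choose b) * (real b + x)^i))"
      by (simp add: sum_distrib_left sum_distrib_right mult_ac sum.swap[of _ "{..n}"])
    also have "\<dots> = - (\<Sum>i\<le>k'. real (Suc k' choose i) * (if i = n then (-1)^n * fact n else 0))"
      using Suc.prems Suc by (intro arg_cong[where f=uminus] sum.cong refl) (simp add: Suc.IH)
    also have "\<dots> = (if k = Suc n then (-1)^Suc n * fact (Suc n) else 0)"
    proof (cases "k' = n")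
      case True
      have e: "\<And>i. real (Suc k' choose i) * (if i = n then (-1)^n * fact n else 0) =
         (if i = n then real (Suc k' choose i) * ((-1)^n * fact n) else 0)" by simp
      show ?thesis unfolding e using True Suc by (simp add: sum.delta algebra_simps)
    next
      case False
      then have "n \<notin> {..k'}" using Suc Suc.prems by auto
      then show ?thesis using Suc False by (simp add: sum.delta)
    qed
    finally show ?thesis .
  qed
qed


definition DD :: "nat \<Rightarrow> ('m::finite \<Rightarrow> nat) set" where
  "DD r = {a. mdeg a = r}"

definition coef :: "nat \<Rightarrow> ('m::finite \<Rightarrow> nat) \<Rightarrow> ('m \<Rightarrow> nat) \<Rightarrow> real" where
  "coef r beta a = (-1)^(r + mdeg beta) * (\<Prod>j\<in>UNIV. real (a j choose beta j)) / fact r"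

definition mon :: "('m::finite \<Rightarrow> nat) \<Rightarrow> ('m \<Rightarrow> nat) \<Rightarrow> real" where
  "mon beta alpha = (\<Prod>j\<in>UNIV. real (beta j) ^ alpha j)"

lemma le_mdeg: "a j \<le> mdeg (a::'m::finite \<Rightarrow> nat)"
  unfolding mdeg_def by (rule member_le_sum) auto

lemma finite_bounded_funs: "finite {a::'m::finite \<Rightarrow> nat. \<forall>j. a j \<le> r}"
proof -
  have "{a::'m \<Rightarrow> nat. \<forall>j. a j \<le> r} = PiE UNIV (\<lambda>_. {..r})"
    by (auto simp: PiE_def Pi_def)
  then show ?thesis by (simp add: finite_PiE)
qed

lemma finite_DD: "finite (DD r :: ('m::finite \<Rightarrow> nat) set)"
  by (rule finite_subset[OF _ finite_bounded_funs[of r]]) (auto simp: DD_def intro: order_trans[OF le_mdeg])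

lemma finite_beta: "finite (beta_indices r :: ('m::finite \<Rightarrow> nat) set)"
  by (rule finite_subset[OF _ finite_bounded_funs[of r]]) (auto simp: beta_indices_def intro: order_trans[OF le_mdeg])

lemma mfact_pos: "mfact alpha > 0"
  unfolding mfact_def by (simp add: prod_pos)

lemma key_identity:
  fixes alpha a :: "'m::finite \<Rightarrow> nat"
  assumes r: "r \<ge> 1" and al: "mdeg alpha = r" and a: "mdeg a = r"
  shows "(\<Sum>beta\<in>beta_indices r. fact r / mfact alpha * mon beta alpha * coef r beta a) =
         (if a = alpha then 1 else 0)"
proof -
  define g where "g beta = (-1)^r * (\<Prod>j\<in>UNIV. (-1)^(beta j) * real (a j choose beta j) * real (beta j) ^ alpha j)" for beta :: "'m \<Rightarrow> nat"
  define P where "P = {b::'m \<Rightarrow> nat. \<forall>j. b j \<le> a j}"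
  have finP: "finite P" unfolding P_def
    by (rule finite_subset[OF _ finite_bounded_funs[of r]]) (use le_mdeg[of a] a in \<open>auto intro: order_trans\<close>)
  have gdef: "fact r / mfact alpha * mon beta alpha * coef r beta a = g beta / mfact alpha" for beta
  proof -
    have "(-1::real)^(r + mdeg beta) = (-1)^r * (\<Prod>j\<in>UNIV. (-1)^(beta j))"
      by (simp add: mdeg_def power_add power_sum)
    then show ?thesis
      unfolding g_def coef_def mon_def by (simp add: prod.distrib field_simps)
  qed
  have g0: "g beta = 0" if "beta \<notin> P" for beta
  proof -
    from that obtain j where "beta j > a j" unfolding P_def by (auto simp: not_le)
    then have z: "real (a j choose beta j) = 0" by simp
    show ?thesis unfolding g_def by (subst prod_zero) (use z in auto)
  qed
  have gz: "g (\<lambda>_. 0) = 0"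
  proof -
    have "alpha \<noteq> (\<lambda>_. 0)" using al r by (auto simp: mdeg_def)
    then obtain j where z: "alpha j \<noteq> 0" by auto
    show ?thesis unfolding g_def by (subst prod_zero) (use z in auto)
  qed
  have L: "(\<Sum>beta\<in>beta_indices r. fact r / mfact alpha * mon beta alpha * coef r beta a) =
     (\<Sum>beta\<in>beta_indices r. g beta) / mfact alpha"
    by (simp only: gdef sum_divide_distrib)
  have "(\<Sum>beta\<in>beta_indices r. g beta) = (\<Sum>beta\<in>beta_indices r \<union> P. g beta)"
  proof (rule sum.mono_neutral_left)
    show "finite (beta_indices r \<union> P)" using finP finite_beta by auto
    show "\<forall>i\<in>beta_indices r \<union> P - beta_indices r. g i = 0"
    proof
      fix b assume b: "b \<in> beta_indices r \<union> P - beta_indices r"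
      then have "mdeg b \<le> mdeg a" unfolding P_def mdeg_def by (auto intro: sum_mono)
      with b a have "mdeg b = 0" by (auto simp: beta_indices_def)
      then have "b = (\<lambda>_. 0)" by (auto simp: mdeg_def)
      then show "g b = 0" using gz by simp
    qed
  qed auto
  also have "\<dots> = (\<Sum>beta\<in>P. g beta)"
    by (rule sum.mono_neutral_right) (use finP finite_beta g0 in auto)
  also have "P = PiE UNIV (\<lambda>j. {..a j})" unfolding P_def by (auto simp: PiE_def Pi_def)
  also have "(\<Sum>beta\<in>PiE UNIV (\<lambda>j. {..a j}). g beta) =
     (-1)^r * (\<Prod>j\<in>UNIV. \<Sum>b\<le>a j. (-1)^b * real (a j choose b) * (real b + 0) ^ alpha j)"
    unfolding g_def by (subst prod_sum_PiE) (auto simp: sum_distrib_left)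
  finally have S: "(\<Sum>beta\<in>beta_indices r. g beta) = (-1)^r * (\<Prod>j\<in>UNIV. \<Sum>b\<le>a j. (-1)^b * real (a j choose b) * (real b + 0) ^ alpha j)" .
  show ?thesis
  proof (cases "a = alpha")
    case True
    have "(\<Prod>j\<in>UNIV. \<Sum>b\<le>a j. (-1)^b * real (a j choose b) * (real b + 0) ^ alpha j) =
          (\<Prod>j\<in>UNIV. (-1)^(alpha j) * fact (alpha j))"
      using True by (intro prod.cong refl) (simp only: fin_diff[OF order_refl], simp)
    also have "\<dots> = (-1)^r * mfact alpha"
      using al by (simp add: prod.distrib mfact_def mdeg_def power_sum[symmetric])
    finally show ?thesis using S True mfact_pos[of alpha] L by simp
  next
    case False
    have "\<exists>j. alpha j < a j"
    proof (rule ccontr)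
      assume "\<not> ?thesis"
      then have le: "\<forall>j. a j \<le> alpha j" by (auto simp: not_less)
      from False obtain j where "a j \<noteq> alpha j" by auto
      with le have "a j < alpha j" using le_neq_implies_less by blast
      then have "mdeg a < mdeg alpha" unfolding mdeg_def
        by (intro sum_strict_mono_ex1) (auto simp: le)
      with a al show False by simp
    qed
    then obtain j where j: "alpha j < a j" by auto
    have "(\<Prod>j\<in>UNIV. \<Sum>b\<le>a j. (-1)^b * real (a j choose b) * (real b + 0) ^ alpha j) = 0"
      using j fin_diff[of "alpha j" "a j" 0] by (intro prod_zero) auto
    then show ?thesis using S False L by simp
  qed
qed


lemma CkH_const: "CkH r k (\<lambda>p. c)"
proof (induction k arbitrary: c r)
  case 0 then show ?case by (simp add: contH_def)
next
  case (Suc k)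
  show ?case
    by (simp add: contH_def) (metis Suc.IH DERIV_const)
qed

lemma contH_lin:
  assumes "finite D"
  shows "contH r (\<lambda>p. \<Sum>a\<in>D. w a * (p a $ i))"
  unfolding contH_def
proof (intro ballI allI impI)
  fix p :: "('a::finite, 'b::finite) fibre" and e :: real
  assume p: "p \<in> Hr r" and e: "e > 0"
  define W where "W = (\<Sum>a\<in>D. \<bar>w a\<bar>)"
  have W0: "W \<ge> 0" unfolding W_def by (simp add: sum_nonneg)
  define d where "d = e / (1 + W)"
  have d: "d > 0" using e W0 by (simp add: d_def)
  show "\<exists>d>0. \<forall>q\<in>Hr r. (\<forall>alpha. mdeg alpha = r \<longrightarrow> norm (q alpha - p alpha) < d) \<longrightarrow>
      \<bar>(\<Sum>a\<in>D. w a * (q a $ i)) - (\<Sum>a\<in>D. w a * (p a $ i))\<bar> < e"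
  proof (intro exI[of _ d] conjI d ballI impI)
    fix q :: "('a, 'b) fibre" assume q: "q \<in> Hr r" and cl: "\<forall>alpha. mdeg alpha = r \<longrightarrow> norm (q alpha - p alpha) < d"
    have t: "\<bar>w a * (q a $ i) - w a * (p a $ i)\<bar> \<le> \<bar>w a\<bar> * d" for a
    proof (cases "mdeg a = r")
      case True
      have "\<bar>q a $ i - p a $ i\<bar> \<le> norm (q a - p a)"
        using component_le_norm_cart[of "q a - p a" i] by simp
      also have "\<dots> \<le> d" using cl True by (simp add: less_imp_le)
      finally have "\<bar>q a $ i - p a $ i\<bar> \<le> d" .
      then have "\<bar>w a\<bar> * \<bar>q a $ i - p a $ i\<bar> \<le> \<bar>w a\<bar> * d" by (simp add: mult_left_mono)
      then show ?thesis by (simp add: abs_mult[symmetric] right_diff_distrib)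
    next
      case False
      then have "q a = 0" "p a = 0" using p q by (auto simp: Hr_def)
      then show ?thesis using d by simp
    qed
    have "\<bar>(\<Sum>a\<in>D. w a * (q a $ i)) - (\<Sum>a\<in>D. w a * (p a $ i))\<bar>
        = \<bar>\<Sum>a\<in>D. w a * (q a $ i) - w a * (p a $ i)\<bar>" by (simp add: sum_subtractf)
    also have "\<dots> \<le> (\<Sum>a\<in>D. \<bar>w a * (q a $ i) - w a * (p a $ i)\<bar>)" by (rule sum_abs)
    also have "\<dots> \<le> (\<Sum>a\<in>D. \<bar>w a\<bar> * d)" by (rule sum_mono) (rule t)
    also have "\<dots> = W * d" by (simp add: W_def sum_distrib_right)
    also have "\<dots> < e"
    proof -
      have "W * d < (1 + W) * d" using d by simp
      also have "\<dots> = e" using W0 by (simp add: d_def)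
      finally show ?thesis .
    qed
    finally show "\<bar>(\<Sum>a\<in>D. w a * (q a $ i)) - (\<Sum>a\<in>D. w a * (p a $ i))\<bar> < e" .
  qed
qed

lemma CkH_lin:
  assumes "finite D"
  shows "CkH r k (\<lambda>p. \<Sum>a\<in>D. w a * (p a $ i))"
proof (cases k)
  case 0 then show ?thesis using contH_lin[OF assms] by simp
next
  case (Suc k')
  have "\<exists>g'. (\<forall>p\<in>Hr r. ((\<lambda>t. \<Sum>a\<in>D. w a * ((p(alpha := p alpha + t *\<^sub>R axis i' 1)) a $ i))
          has_real_derivative g' p) (at 0)) \<and> CkH r k' g'" for alpha i'
  proof (intro exI[of _ "\<lambda>p. if alpha \<in> D \<and> i' = i then w alpha else 0"] conjI ballI)
    fix p :: "('a, 'b) fibre"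
    define c where "c = (if alpha \<in> D \<and> i' = i then w alpha else 0)"
    have eq: "(\<Sum>a\<in>D. w a * ((p(alpha := p alpha + t *\<^sub>R axis i' 1)) a $ i)) =
       (\<Sum>a\<in>D. w a * (p a $ i)) + t * c" for t
    proof -
      have "(\<Sum>a\<in>D. w a * ((p(alpha := p alpha + t *\<^sub>R axis i' 1)) a $ i)) =
         (\<Sum>a\<in>D. w a * (p a $ i) + (if a = alpha then w a * t * (if i' = i then 1 else 0) else 0))"
        by (intro sum.cong refl) (auto simp: axis_def algebra_simps)
      also have "\<dots> = (\<Sum>a\<in>D. w a * (p a $ i)) + t * c"
        using assms by (simp add: sum.distrib c_def)
      finally show ?thesis .
    qed
    show "((\<lambda>t. \<Sum>a\<in>D. w a * ((p(alpha := p alpha + t *\<^sub>R axis i' 1)) a $ i))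
          has_real_derivative (if alpha \<in> D \<and> i' = i then w alpha else 0)) (at 0)"
      unfolding eq c_def[symmetric] by (auto intro!: derivative_eq_intros)
  next
    show "CkH r k' (\<lambda>p. if alpha \<in> D \<and> i' = i then w alpha else 0)" by (rule CkH_const)
  qed
  then show ?thesis using Suc contH_lin[OF assms] by simp
qed


definition cvec :: "nat \<Rightarrow> ('m::finite \<Rightarrow> nat) \<Rightarrow> ('m,'n::finite) fibre \<Rightarrow> real^'n" where
  "cvec r beta p = (\<Sum>a\<in>DD r. coef r beta a *\<^sub>R p a)"

definition PhiD :: "nat \<Rightarrow> ('m::finite \<Rightarrow> nat) \<Rightarrow> ('m,'n::finite) fibre \<Rightarrow> ('m,'n) fibre" where
  "PhiD r beta p alpha = (if mdeg alpha = r then (fact r / mfact alpha * mon beta alpha) *\<^sub>R cvec r beta p else 0)"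

lemma PhiD_smooth: "smooth_fibre_map r (PhiD r beta)"
  unfolding smooth_fibre_map_def
proof (intro conjI allI impI ballI)
  fix p :: "('a,'b) fibre" and alpha :: "'a \<Rightarrow> nat" assume "r < mdeg alpha"
  then show "PhiD r beta p alpha = 0" by (simp add: PhiD_def)
next
  fix alpha :: "'a \<Rightarrow> nat" and i :: 'b
  define K where "K = (if mdeg alpha = r then fact r / mfact alpha * mon beta alpha else 0)"
  have eq: "(\<lambda>p. PhiD r beta p alpha $ i) = (\<lambda>p. \<Sum>a\<in>DD r. (K * coef r beta a) * (p a $ i))"
    by (auto simp: PhiD_def K_def cvec_def sum_distrib_left mult_ac)
  show "smoothH r (\<lambda>p. PhiD r beta p alpha $ i)"
    unfolding smoothH_def eq by (intro allI CkH_lin finite_DD)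
qed

lemma PhiD_zero: "PhiD r beta (\<lambda>alpha. 0) = (\<lambda>alpha. 0)"
  by (auto simp: PhiD_def cvec_def)

lemma mdeg_upd: "mdeg (alpha(j := alpha j + 1)) = mdeg alpha + 1"
proof -
  have "mdeg (alpha(j := alpha j + 1)) = (\<Sum>i\<in>UNIV. alpha i + (if i = j then 1 else 0))"
    unfolding mdeg_def by (intro sum.cong) auto
  then show ?thesis by (simp add: sum.distrib mdeg_def)
qed

lemma mon_upd: "mon beta (alpha(j := alpha j + 1)) = real (beta j) * mon beta alpha"
proof -
  have "mon beta (alpha(j := alpha j + 1)) = (\<Prod>i\<in>UNIV. real (beta i) ^ alpha i * (if i = j then real (beta j) else 1))"
    unfolding mon_def by (intro prod.cong) auto
  then show ?thesis by (simp add: prod.distrib mon_def)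
qed

lemma PhiD_primitive:
  assumes r: "r \<ge> 1"
  shows "primitive r (tau_hyp beta) (\<lambda>x. PhiD r beta (s x))"
  unfolding primitive_def
proof (intro ballI conjI allI impI)
  fix x :: "real^'a" and alpha :: "'a \<Rightarrow> nat"
  assume "mdeg alpha \<le> r - 1"
  then show "PhiD r beta (s x) alpha = 0" using r by (simp add: PhiD_def)
next
  fix x :: "real^'a" and alpha :: "'a \<Rightarrow> nat" and nu :: "real^'a"
  assume al: "mdeg alpha = r - 1" and nu: "nu \<in> tau_hyp beta x"
  define c where "c = cvec r beta (s x)"
  have "(\<Sum>j\<in>UNIV. (nu$j * mfact (alpha(j := alpha j + 1))) *\<^sub>R PhiD r beta (s x) (alpha(j := alpha j + 1)))
      = (\<Sum>j\<in>UNIV. (fact r * mon beta alpha * (real (beta j) * nu$j)) *\<^sub>R c)"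
  proof (intro sum.cong refl)
    fix j
    have "mdeg (alpha(j := alpha j + 1)) = r" using al r mdeg_upd[of alpha j] by simp
    then show "(nu$j * mfact (alpha(j := alpha j + 1))) *\<^sub>R PhiD r beta (s x) (alpha(j := alpha j + 1))
      = (fact r * mon beta alpha * (real (beta j) * nu$j)) *\<^sub>R c"
      using mfact_pos[of "alpha(j := alpha j + 1)"]
      by (simp add: PhiD_def c_def mon_upd[of beta alpha j, simplified] field_simps)
  qed
  also have "\<dots> = (fact r * mon beta alpha * (\<Sum>j\<in>UNIV. real (beta j) * nu$j)) *\<^sub>R c"
    by (simp add: scaleR_sum_left[symmetric] sum_distrib_left)
  also have "\<dots> = 0" using nu by (simp add: tau_hyp_def)
  finally show "(\<Sum>j\<in>UNIV. (nu$j * mfact (alpha(j := alpha j + 1))) *\<^sub>R PhiD r beta (s x) (alpha(j := alpha j + 1))) = 0" .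
qed

lemma PhiD_decomp:
  fixes p :: "('m::finite,'n::finite) fibre"
  assumes r: "r \<ge> 1" and p: "p \<in> Hr r"
  shows "p alpha = (\<Sum>beta\<in>beta_indices r. PhiD r beta p alpha)"
proof (cases "mdeg alpha = r")
  case False
  then show ?thesis using p by (simp add: PhiD_def Hr_def)
next
  case True
  have "(\<Sum>beta\<in>beta_indices r. PhiD r beta p alpha) =
     (\<Sum>beta\<in>beta_indices r. \<Sum>a\<in>DD r. (fact r / mfact alpha * mon beta alpha * coef r beta a) *\<^sub>R p a)"
    using True by (simp add: PhiD_def cvec_def scaleR_sum_right)
  also have "\<dots> = (\<Sum>a\<in>DD r. (\<Sum>beta\<in>beta_indices r. fact r / mfact alpha * mon beta alpha * coef r beta a) *\<^sub>R p a)"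
    by (subst sum.swap) (simp add: scaleR_sum_left)
  also have "\<dots> = (\<Sum>a\<in>DD r. (if a = alpha then 1 else 0) *\<^sub>R p a)"
  proof (intro sum.cong refl)
    fix a :: "'m \<Rightarrow> nat" assume "a \<in> DD r"
    then show "(\<Sum>beta\<in>beta_indices r. fact r / mfact alpha * mon beta alpha * coef r beta a) *\<^sub>R p a =
      (if a = alpha then 1 else 0) *\<^sub>R p a"
      using key_identity[OF r True, of a] by (simp add: DD_def)
  qed
  also have "\<dots> = (\<Sum>a\<in>DD r. if a = alpha then p a else 0)"
    by (intro sum.cong) auto
  also have "\<dots> = p alpha"
    using sum.delta[OF finite_DD[of r], of alpha p] True by (simp add: DD_def)
  finally show ?thesis by simp
qed

theorem mainTheorem11:
  fixes r :: nat
  assumes "r \<ge> 1"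
  shows "\<exists>Phi :: ('m::finite \<Rightarrow> nat) \<Rightarrow> ('m,'n::finite) fibre \<Rightarrow> ('m,'n) fibre.
     (\<forall>beta\<in>beta_indices r. smooth_fibre_map r (Phi beta)) \<and>
     (\<forall>sigma :: real^'m \<Rightarrow> ('m,'n) fibre.
        is_jet_section r sigma \<and> lower_trunc_zero r sigma \<longrightarrow>
          (\<forall>x\<in>cube. \<forall>alpha. sigma x alpha = (\<Sum>beta\<in>beta_indices r. Phi beta (sigma x) alpha)) \<and>
          (\<forall>beta\<in>beta_indices r. primitive r (tau_hyp beta) (\<lambda>x. Phi beta (sigma x))) \<and>
          (\<forall>A. closed A \<and> A \<subseteq> cube \<and>
               (\<exists>U. open U \<and> A \<subseteq> U \<and> (\<forall>x\<in>U \<inter> cube. sigma x = (\<lambda>alpha. 0))) \<longrightarrow>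
               (\<forall>beta\<in>beta_indices r. \<exists>V. open V \<and> A \<subseteq> V \<and>
                  (\<forall>x\<in>V \<inter> cube. Phi beta (sigma x) = (\<lambda>alpha. 0)))))"
proof (intro exI[of _ "PhiD r"] conjI ballI allI impI)
  fix beta :: "'m \<Rightarrow> nat"
  show "smooth_fibre_map r (PhiD r beta :: ('m,'n) fibre \<Rightarrow> _)" by (rule PhiD_smooth)
next
  fix sigma :: "real^'m \<Rightarrow> ('m,'n) fibre" and x :: "real^'m" and alpha :: "'m \<Rightarrow> nat"
  assume s: "is_jet_section r sigma \<and> lower_trunc_zero r sigma" and x: "x \<in> cube"
  have "sigma x \<in> Hr r"
  proof -
    have "sigma x a = 0" if "mdeg a \<noteq> r" for a
    proof (cases "mdeg a > r")
      case True then show ?thesis using s x by (auto simp: is_jet_section_def)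
    next
      case False then have "mdeg a \<le> r - 1" using that by auto
      then show ?thesis using s x by (auto simp: lower_trunc_zero_def)
    qed
    then show ?thesis by (auto simp: Hr_def)
  qed
  then show "sigma x alpha = (\<Sum>beta\<in>beta_indices r. PhiD r beta (sigma x) alpha)"
    by (rule PhiD_decomp[OF assms])
next
  fix sigma :: "real^'m \<Rightarrow> ('m,'n) fibre" and beta :: "'m \<Rightarrow> nat"
  show "primitive r (tau_hyp beta) (\<lambda>x. PhiD r beta (sigma x))" by (rule PhiD_primitive[OF assms])
next
  fix sigma :: "real^'m \<Rightarrow> ('m,'n) fibre" and A :: "(real^'m) set" and beta :: "'m \<Rightarrow> nat"
  assume "closed A \<and> A \<subseteq> cube \<and> (\<exists>U. open U \<and> A \<subseteq> U \<and> (\<forall>x\<in>U \<inter> cube. sigma x = (\<lambda>alpha. 0)))"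
  then obtain U where U: "open U" "A \<subseteq> U" "\<forall>x\<in>U \<inter> cube. sigma x = (\<lambda>alpha. 0)" by auto
  show "\<exists>V. open V \<and> A \<subseteq> V \<and> (\<forall>x\<in>V \<inter> cube. PhiD r beta (sigma x) = (\<lambda>alpha. 0))"
    using U PhiD_zero by (intro exI[of _ U]) auto
qed

end
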